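(* Let $m\geq1$ and let $\{\Lambda_i\}_{i\geq1}$ be an infinite collection of proper lattices in $\mathbb{Z}^m$. Put $\mathcal{M}_\mathscr{B}=\bigcup_{i\geq1}\Lambda_i$, $\mathcal{F}_\mathscr{B}=\mathbb{Z}^m\setminus\mathcal{M}_\mathscr{B}$, $\eta=\mathbb{1}_{\mathcal{F}_\mathscr{B}}\in\{0,1\}^{\mathbb{Z}^m}$ and let $X_\eta$ be its orbit closure. Consider: (a) $(X_\eta,(S_{\mathbf{n}})_{\mathbf{n}\in\mathbb{Z}^m})$ is proximal; (b) $\mathbf{0}\in X_\eta$, where $\mathbf{0}_{\mathbf{n}}=0$ for all $\mathbf{n}$; (c) for any $k\geq1$ and any lattices $\widetilde\Lambda_1,\dots,\widetilde\Lambda_k$ in $\mathbb{Z}^m$ with $\bigcup_{j=1}^k\widetilde\Lambda_j\neq\mathbb{Z}^m$, we have $\mathcal{M}_\mathscr{B}\not\subseteq\bigcup_{j=1}^k\widetilde\Lambda_j$; (d) $\{\Lambda_i\}_{i\geq1}$ contains an infinite pairwise coprime subset; (e) for any $\mathbf{n}\in\mathbb{Z}^m$ and any lattice $\Lambda\subseteq\mathbb{Z}^m$, $\mathbf{n}+\Lambda\not\subseteq\mathcal{F}_\mathscr{B}$; (f) $d^*(\mathcal{M}_\mathscr{B})=1$. Then (d) implies (a), and (a), (b), (c), (e), (f) are pairwise equivalent.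
   Context: A lattice in $\mathbb{Z}^m$ is a subgroup of finite index. The shift is $(S_{\mathbf{n}}x)_{\mathbf{g}}=x_{\mathbf{g}+\mathbf{n}}$ on $\{0,1\}^{\mathbb{Z}^m}$ with the product topology; $X_\eta$ is the closure of the orbit of $\eta$. A system is proximal if every pair of its points $(x,y)$ satisfies $\liminf_{\mathbf{n}\to\infty}D(S_{\mathbf{n}}x,S_{\mathbf{n}}y)=0$ for a compatible metric $D$. Proper subgroups $\Lambda,\Lambda'$ are coprime if $\Lambda+\Lambda'=\mathbb{Z}^m$. Upper Banach density: $d^*(A)=\sup\{\limsup_n |A\cap F_n|/|F_n|\}$ over all Følner sequences $(F_n)$ in $\mathbb{Z}^m$ (finite sets with $|(F_n+g)\cap F_n|/|F_n|\to1$ for every $g$). *)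

theory Defs
  imports "HOL-Analysis.Analysis"
begin

text \<open>Z^m is modelled as int ^ 'm for a finite index type 'm (so m = CARD('m) \<ge> 1).
  Points of {0,1}^(Z^m) are functions (int ^ 'm) \<Rightarrow> int taking values in {0,1};
  the function space carries the product topology and the compatible metric from
  HOL-Analysis.Function_Metric.\<close>

definition is_lattice :: "(int ^ 'm::finite) set \<Rightarrow> bool" where
  "is_lattice L \<longleftrightarrow> 0 \<in> L \<and> (\<forall>x\<in>L. \<forall>y\<in>L. x - y \<in> L)
      \<and> finite (range (\<lambda>a. (\<lambda>y. a + y) ` L))"

definition proper_lattice :: "(int ^ 'm::finite) set \<Rightarrow> bool" where
  "proper_lattice L \<longleftrightarrow> is_lattice L \<and> L \<noteq> UNIV"

definition coprime_subgroups :: "(int ^ 'm::finite) set \<Rightarrow> (int ^ 'm) set \<Rightarrow> bool" where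
  "coprime_subgroups L L' \<longleftrightarrow> {x + y |x y. x \<in> L \<and> y \<in> L'} = UNIV"

definition shift :: "int ^ 'm::finite \<Rightarrow> (int ^ 'm \<Rightarrow> int) \<Rightarrow> (int ^ 'm \<Rightarrow> int)" where
  "shift n x = (\<lambda>g. x (g + n))"

definition orbit_closure :: "(int ^ 'm::finite \<Rightarrow> int) \<Rightarrow> (int ^ 'm \<Rightarrow> int) set" where
  "orbit_closure \<eta> = closure (range (\<lambda>n. shift n \<eta>))"

text \<open>Proximality: liminf over n \<rightarrow> \<infinity> (the cofinite filter on Z^m) of the distance is 0.\<close>
definition proximal :: "(int ^ 'm::finite \<Rightarrow> int) set \<Rightarrow> bool" where
  "proximal X \<longleftrightarrow> (\<forall>x\<in>X. \<forall>y\<in>X.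
      Liminf cofinite (\<lambda>n. ereal (dist (shift n x) (shift n y))) = 0)"

definition folner :: "(nat \<Rightarrow> (int ^ 'm::finite) set) \<Rightarrow> bool" where
  "folner F \<longleftrightarrow> (\<forall>n. finite (F n)) \<and>
     (\<forall>g. (\<lambda>n. real (card (((\<lambda>x. x + g) ` F n) \<inter> F n)) / real (card (F n))) \<longlonglongrightarrow> 1)"

definition upper_banach_density :: "(int ^ 'm::finite) set \<Rightarrow> ereal" where
  "upper_banach_density A = (SUP F \<in> {F. folner F}.
      limsup (\<lambda>n. ereal (real (card (A \<inter> F n)) / real (card (F n)))))"

end

theory Submission
  imports Defs
begin


lemma lat_add: "is_lattice L \<Longrightarrow> x \<in> L \<Longrightarrow> y \<in> L \<Longrightarrow> x + y \<in> L"
proof -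
  assume L: "is_lattice L" "x \<in> L" "y \<in> L"
  then have "0 - y \<in> L" unfolding is_lattice_def by blast
  then have "x - (0 - y) \<in> L" using L unfolding is_lattice_def by blast
  then show ?thesis by simp
qed

lemma lat_diff: "is_lattice L \<Longrightarrow> x \<in> L \<Longrightarrow> y \<in> L \<Longrightarrow> x - y \<in> L"
  unfolding is_lattice_def by blast

lemma lat_zero: "is_lattice L \<Longrightarrow> 0 \<in> L"
  unfolding is_lattice_def by blast

lemma lat_UNIV: "is_lattice (UNIV :: (int^'m::finite) set)"
proof -
  have "range (\<lambda>a. (\<lambda>y. a + y) ` (UNIV :: (int^'m) set)) = {UNIV}"
    by (auto simp: surj_def intro!: exI[of _ "_ - _"])
  then show ?thesis unfolding is_lattice_def by auto
qed

lemma lat_Int: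
  assumes L: "is_lattice L" and K: "is_lattice K"
  shows "is_lattice (L \<inter> K)"
proof -
  have eq: "(\<lambda>y. a + y) ` (L \<inter> K) = (\<lambda>y. a + y) ` L \<inter> (\<lambda>y. a + y) ` K" for a :: "int^'a"
    by auto
  have "range (\<lambda>a. (\<lambda>y. a + y) ` (L \<inter> K)) \<subseteq>
      (\<lambda>(A,B). A \<inter> B) ` (range (\<lambda>a. (\<lambda>y. a + y) ` L) \<times> range (\<lambda>a. (\<lambda>y. a + y) ` K))"
    unfolding eq by auto
  moreover have "finite ((\<lambda>(A,B). A \<inter> B) ` (range (\<lambda>a. (\<lambda>y. a + y) ` L) \<times> range (\<lambda>a. (\<lambda>y. a + y) ` K)))"
    using L K unfolding is_lattice_def by auto
  ultimately have "finite (range (\<lambda>a. (\<lambda>y. a + y) ` (L \<inter> K)))" by (rule finite_subset)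
  then show ?thesis using L K unfolding is_lattice_def by auto
qed

lemma lat_reps:
  assumes L: "is_lattice (L :: (int^'m::finite) set)"
  shows "\<exists>R. finite R \<and> R \<noteq> {} \<and> (\<forall>g. \<exists>r\<in>R. g - r \<in> L)"
proof -
  define C where "C = range (\<lambda>a. (\<lambda>y. a + y) ` L)"
  define R where "R = (\<lambda>X. SOME a. X = (\<lambda>y. a + y) ` L) ` C"
  have "finite R" using L unfolding R_def C_def is_lattice_def by auto
  moreover have "R \<noteq> {}" unfolding R_def C_def by auto
  moreover have "\<exists>r\<in>R. g - r \<in> L" for g
  proof -
    let ?X = "(\<lambda>y. g + y) ` L"
    define r where "r = (SOME a. ?X = (\<lambda>y. a + y) ` L)"
    have "?X = (\<lambda>y. r + y) ` L" unfolding r_def by (rule someI_ex) blast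
    moreover have "g \<in> ?X" using lat_zero[OF L] by force
    ultimately obtain l where "l \<in> L" "g = r + l" by auto
    moreover have "r \<in> R" unfolding R_def C_def r_def by auto
    ultimately show ?thesis by (intro bexI[of _ r]) auto
  qed
  ultimately show ?thesis by blast
qed

lemma lat_infinite:
  assumes L: "is_lattice (L :: (int^'m::finite) set)"
  shows "infinite L"
proof
  assume fin: "finite L"
  obtain R where R: "finite R" "\<forall>g. \<exists>r\<in>R. g - r \<in> L" using lat_reps[OF L] by blast
  have "UNIV \<subseteq> (\<Union>r\<in>R. (\<lambda>y. r + y) ` L)"
  proof
    fix g :: "int^'m" obtain r where "r \<in> R" "g - r \<in> L" using R by blast
    then show "g \<in> (\<Union>r\<in>R. (\<lambda>y. r + y) ` L)" by (auto intro!: bexI[of _ r] image_eqI[of _ _ "g - r"])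
  qed
  moreover have "finite (\<Union>r\<in>R. (\<lambda>y. r + y) ` L)" using fin R by auto
  ultimately have "finite (UNIV :: (int^'m) set)" by (rule finite_subset)
  moreover have "infinite (UNIV :: (int^'m) set)" by (rule infinite_UNIV_vec) simp
  ultimately show False by simp
qed

lemma closure_fun_int:
  fixes S :: "('a \<Rightarrow> int) set"
  shows "x \<in> closure S \<longleftrightarrow> (\<forall>V. finite V \<longrightarrow> (\<exists>y\<in>S. \<forall>g\<in>V. y g = x g))"
proof
  assume x: "x \<in> closure S"
  show "\<forall>V. finite V \<longrightarrow> (\<exists>y\<in>S. \<forall>g\<in>V. y g = x g)"
  proof (intro allI impI)
    fix V :: "'a set" assume V: "finite V"
    have "open {f. \<forall>i\<in>V. f (id i) \<in> {x i}}"
      by (rule product_topology_basis') (use V in \<open>auto simp: open_discrete\<close>)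
    moreover have "x \<in> {f. \<forall>i\<in>V. f (id i) \<in> {x i}}" by auto
    ultimately have "S \<inter> {f. \<forall>i\<in>V. f (id i) \<in> {x i}} \<noteq> {}"
      using x closure_iff_nhds_not_empty by blast
    then show "\<exists>y\<in>S. \<forall>g\<in>V. y g = x g" by auto
  qed
next
  assume H: "\<forall>V. finite V \<longrightarrow> (\<exists>y\<in>S. \<forall>g\<in>V. y g = x g)"
  show "x \<in> closure S"
    unfolding closure_iff_nhds_not_empty
  proof (intro allI impI)
    fix A U assume UA: "U \<subseteq> A" and U: "open U" and xU: "x \<in> U"
    have "openin (product_topology (\<lambda>i. euclidean) UNIV) U" using U by (simp add: open_fun_def)
    from product_topology_open_contains_basis[OF this xU] obtain X where
      X: "x \<in> Pi\<^sub>E UNIV X" "finite {i. X i \<noteq> topspace euclidean}" "Pi\<^sub>E UNIV X \<subseteq> U"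
      by blast
    obtain y where y: "y \<in> S" "\<forall>g\<in>{i. X i \<noteq> UNIV}. y g = x g" using H X(2) by auto
    have "y \<in> Pi\<^sub>E UNIV X"
      using X(1) y(2) by (auto simp: PiE_iff) (metis UNIV_I)
    then show "S \<inter> A \<noteq> {}" using y(1) X(3) UA by blast
  qed
qed

lemma dist_lower:
  fixes f h :: "'a::countable \<Rightarrow> int"
  assumes "f g \<noteq> h g"
  shows "(1/2)^(to_nat g) \<le> dist (\<lambda>z. real_of_int (f z)) (\<lambda>z. real_of_int (h z))"
proof -
  let ?F = "(\<lambda>z. real_of_int (f z))" and ?H = "(\<lambda>z. real_of_int (h z))"
  have *: "summable (\<lambda>n. (1/2)^n * min (dist (?F (from_nat n)) (?H (from_nat n))) 1)"
    by (rule summable_comparison_test'[of "\<lambda>n. (1/2)^n"], auto simp add: summable_geometric_iff)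
  have "dist (f g) (h g) \<ge> (1::real)" using assms
    by (simp add: dist_real_def)
  then have "(1/2)^(to_nat g) = (\<Sum>n\<in>{to_nat g}. (1/2)^n * min (dist (?F (from_nat n)) (?H (from_nat n))) (1::real))"
    by (simp add: dist_real_def)
  also have "\<dots> \<le> (\<Sum>n. (1/2)^n * min (dist (?F (from_nat n)) (?H (from_nat n))) 1)"
    by (rule sum_le_suminf[OF *]) auto
  also have "\<dots> = dist ?F ?H" unfolding dist_fun_def by simp
  finally show ?thesis .
qed

lemma dist_upper:
  fixes f h :: "'a::countable \<Rightarrow> int"
  assumes "\<forall>n\<le>N. f (from_nat n) = h (from_nat n)"
  shows "dist (\<lambda>z. real_of_int (f z)) (\<lambda>z. real_of_int (h z)) \<le> (1/2)^N"
proof -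
  have "{dist (real_of_int (f (from_nat n))) (real_of_int (h (from_nat n)))|n. n \<le> N} = {0}"
    using assms by force
  then show ?thesis
    using dist_fun_le_dist_first_terms[of "\<lambda>z. real_of_int (f z)" "\<lambda>z. real_of_int (h z)" N] by simp
qed




definition etaB :: "(int^'m::finite) set set \<Rightarrow> (int^'m \<Rightarrow> int)" where
  "etaB B = (\<lambda>g. if g \<in> UNIV - \<Union>B then 1 else 0)"

definition propE :: "(int^'m::finite) set set \<Rightarrow> bool" where
  "propE B \<longleftrightarrow> (\<forall>n L. is_lattice L \<longrightarrow> \<not> ((\<lambda>x. n + x) ` L \<subseteq> UNIV - \<Union>B))"

definition recur :: "(int^'m::finite) set set \<Rightarrow> (int^'m \<Rightarrow> int) \<Rightarrow> (int^'m) set \<Rightarrow> int^'m \<Rightarrow> bool" where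
  "recur B x L k \<longleftrightarrow> (\<forall>V. finite V \<longrightarrow> (\<exists>n. n - k \<in> L \<and> (\<forall>g\<in>V. x g = etaB B (g + n))))"

lemma X_char: "x \<in> orbit_closure (etaB B) \<longleftrightarrow> (\<forall>V. finite V \<longrightarrow> (\<exists>n. \<forall>g\<in>V. x g = etaB B (g + n)))"
  unfolding orbit_closure_def closure_fun_int by (auto simp: shift_def; metis)

lemma etaB_0: "g \<in> \<Union>B \<Longrightarrow> etaB B g = 0" unfolding etaB_def by auto

lemma e_prime:
  assumes latB: "\<forall>L\<in>B. is_lattice L" and E: "propE B" and V: "finite V" and L0: "is_lattice L0"
  shows "\<exists>s1 L1. is_lattice L1 \<and> L1 \<subseteq> L0 \<and> s1 - c \<in> L0 \<and> (\<forall>l\<in>L1. \<forall>v\<in>V. v + (s1 + l) \<in> \<Union>B)"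
  using V
proof (induction V rule: finite_induct)
  case empty
  show ?case using L0 lat_zero[OF L0] by (intro exI[of _ c] exI[of _ L0]) auto
next
  case (insert w V)
  then obtain s1 L1 where s1: "is_lattice L1" "L1 \<subseteq> L0" "s1 - c \<in> L0" "\<forall>l\<in>L1. \<forall>v\<in>V. v + (s1 + l) \<in> \<Union>B"
    by blast
  from E s1(1) have "\<not> ((\<lambda>x. (w + s1) + x) ` L1 \<subseteq> UNIV - \<Union>B)" unfolding propE_def by blast
  then obtain l Lam where l: "l \<in> L1" "Lam \<in> B" "w + s1 + l \<in> Lam" by blast
  have LamL: "is_lattice Lam" using latB l(2) by blast
  show ?case
  proof (intro exI[of _ "s1 + l"] exI[of _ "L1 \<inter> Lam"] conjI ballI)
    show "is_lattice (L1 \<inter> Lam)" by (rule lat_Int[OF s1(1) LamL])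
    show "L1 \<inter> Lam \<subseteq> L0" using s1(2) by auto
    have eq: "s1 + l - c = (s1 - c) + l" by simp
    show "s1 + l - c \<in> L0" unfolding eq using lat_add[OF L0 s1(3)] l(1) s1(2) by auto
  next
    fix l' v assume l': "l' \<in> L1 \<inter> Lam" and v: "v \<in> insert w V"
    show "v + (s1 + l + l') \<in> \<Union>B"
    proof (cases "v = w")
      case True
      have "w + (s1 + l + l') = (w + s1 + l) + l'" by (simp add: algebra_simps)
      moreover have "(w + s1 + l) + l' \<in> Lam" using lat_add[OF LamL l(3)] l' by auto
      ultimately show ?thesis using True l(2) by (auto simp: add.assoc)
    next
      case False
      then have "v \<in> V" using v by auto
      moreover have "l + l' \<in> L1" using lat_add[OF s1(1) l(1)] l' by auto
      ultimately have "v + (s1 + (l + l')) \<in> \<Union>B" using s1(4) by blast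
      then show ?thesis by (simp add: algebra_simps)
    qed
  qed
qed

lemma recur_base: "x \<in> orbit_closure (etaB B) \<Longrightarrow> recur B x UNIV 0"
  unfolding recur_def X_char by auto

lemma recur_refine:
  assumes r: "recur B x L0 k0" and L0: "is_lattice L0" and L1: "is_lattice L1" "L1 \<subseteq> L0"
  shows "\<exists>k1. k1 - k0 \<in> L0 \<and> recur B x L1 k1"
proof (rule ccontr)
  assume H: "\<not> ?thesis"
  obtain R where R: "finite R" "\<forall>g. \<exists>r\<in>R. g - r \<in> L1" using lat_reps[OF L1(1)] by blast
  have "\<forall>r\<in>R. r - k0 \<in> L0 \<longrightarrow> (\<exists>W. finite W \<and> \<not> (\<exists>n. n - r \<in> L1 \<and> (\<forall>g\<in>W. x g = etaB B (g + n))))"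
    using H unfolding recur_def by blast
  then obtain Wf where Wf: "\<forall>r\<in>R. r - k0 \<in> L0 \<longrightarrow> finite (Wf r) \<and> \<not> (\<exists>n. n - r \<in> L1 \<and> (\<forall>g\<in>Wf r. x g = etaB B (g + n)))"
    by metis
  define W where "W = (\<Union>r\<in>{r\<in>R. r - k0 \<in> L0}. Wf r)"
  have "finite W" unfolding W_def using R(1) Wf by auto
  then obtain n where n: "n - k0 \<in> L0" "\<forall>g\<in>W. x g = etaB B (g + n)" using r unfolding recur_def by blast
  obtain r0 where r0: "r0 \<in> R" "n - r0 \<in> L1" using R by blast
  have eq: "r0 - k0 = (n - k0) - (n - r0)" by simp
  have rk: "r0 - k0 \<in> L0" unfolding eq by (rule lat_diff[OF L0 n(1)]) (use r0(2) L1(2) in auto)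
  then have "Wf r0 \<subseteq> W" unfolding W_def using r0(1) by auto
  then show False using Wf r0 rk n(2) by blast
qed

lemma main_zero:
  assumes latB: "\<forall>L\<in>B. is_lattice L" and E: "propE B" and x: "x \<in> orbit_closure (etaB B)"
    and V: "finite V" and L0: "is_lattice L0"
  shows "\<exists>c' L'. is_lattice L' \<and> L' \<subseteq> L0 \<and> c' - c \<in> L0 \<and> (\<forall>l\<in>L'. \<forall>v\<in>V. x (v + (c' + l)) = 0)"
proof -
  obtain k0 where k0: "recur B x L0 k0"
    using recur_refine[OF recur_base[OF x] lat_UNIV L0] by auto
  obtain s1 L1 where s1: "is_lattice L1" "L1 \<subseteq> L0" "s1 - (c + k0) \<in> L0" "\<forall>l\<in>L1. \<forall>v\<in>V. v + (s1 + l) \<in> \<Union>B"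
    using e_prime[OF latB E V L0] by blast
  obtain k1 where k1: "k1 - k0 \<in> L0" "recur B x L1 k1"
    using recur_refine[OF k0 L0 s1(1,2)] by blast
  show ?thesis
  proof (intro exI[of _ "s1 - k1"] exI[of _ L1] conjI ballI)
    show "is_lattice L1" "L1 \<subseteq> L0" using s1 by auto
    have eq: "s1 - k1 - c = (s1 - (c + k0)) - (k1 - k0)" by simp
    show "s1 - k1 - c \<in> L0" unfolding eq using lat_diff[OF L0 s1(3) k1(1)] .
  next
    fix l v assume l: "l \<in> L1" and v: "v \<in> V"
    obtain n where n: "n - k1 \<in> L1" "x (v + (s1 - k1 + l)) = etaB B (v + (s1 - k1 + l) + n)"
      using k1(2) unfolding recur_def by (metis finite.emptyI finite_insert insertI1)
    have "l + (n - k1) \<in> L1" using lat_add[OF s1(1) l n(1)] .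
    then have "v + (s1 + (l + (n - k1))) \<in> \<Union>B" using s1(4) v by blast
    moreover have "v + (s1 - k1 + l) + n = v + (s1 + (l + (n - k1)))" by simp
    ultimately show "x (v + (s1 - k1 + l)) = 0" using n(2) etaB_0 by metis
  qed
qed




lemma e_imp_b:
  assumes latB: "\<forall>L\<in>B. is_lattice L" and E: "propE B"
  shows "(\<lambda>_. 0) \<in> orbit_closure (etaB B)"
  unfolding X_char
proof (intro allI impI)
  fix V :: "(int^'a) set" assume V: "finite V"
  obtain s1 L1 where s1: "is_lattice L1" "\<forall>l\<in>L1. \<forall>v\<in>V. v + (s1 + l) \<in> \<Union>B"
    using e_prime[OF latB E V lat_UNIV, of 0] by blast
  have "\<forall>g\<in>V. g + s1 \<in> \<Union>B" using s1(2) lat_zero[OF s1(1)] by force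
  then show "\<exists>n. \<forall>g\<in>V. 0 = etaB B (g + n)" using etaB_0 by metis
qed

lemma b_imp_e:
  assumes b: "(\<lambda>_. 0) \<in> orbit_closure (etaB B)"
  shows "propE B"
  unfolding propE_def
proof (intro allI impI notI)
  fix n and L :: "(int^'a) set" assume L: "is_lattice L" and sub: "(\<lambda>x. n + x) ` L \<subseteq> UNIV - \<Union>B"
  obtain R where R: "finite R" "\<forall>g. \<exists>r\<in>R. g - r \<in> L" using lat_reps[OF L] by blast
  obtain n0 where n0: "\<forall>g\<in>R. 0 = etaB B (g + n0)" using b R(1) unfolding X_char by blast
  obtain r where r: "r \<in> R" "(n - n0) - r \<in> L" using R by blast
  have "0 - ((n - n0) - r) \<in> L" using lat_diff[OF L lat_zero[OF L] r(2)] .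
  moreover have "r + n0 = n + (0 - ((n - n0) - r))" by simp
  ultimately have "r + n0 \<in> (\<lambda>x. n + x) ` L" by blast
  then have "etaB B (r + n0) = 1" using sub unfolding etaB_def by auto
  then show False using n0 r(1) by auto
qed

lemma a_imp_e:
  assumes latB: "\<forall>L\<in>B. is_lattice L" and Bne: "B \<noteq> {}" and a: "proximal (orbit_closure (etaB B))"
  shows "propE B"
  unfolding propE_def
proof (intro allI impI notI)
  fix n and L :: "(int^'a) set" assume L: "is_lattice L" and sub: "(\<lambda>x. n + x) ` L \<subseteq> UNIV - \<Union>B"
  obtain Lam where Lam: "Lam \<in> B" using Bne by blast
  have LamL: "is_lattice Lam" using latB Lam by blast
  define K where "K = L \<inter> Lam"
  have K: "is_lattice K" unfolding K_def by (rule lat_Int[OF L LamL])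
  obtain R where R: "finite R" "R \<noteq> {}" "\<forall>g. \<exists>r\<in>R. g - r \<in> K" using lat_reps[OF K] by blast
  define x where "x = etaB B"
  define y where "y = shift n (etaB B)"
  have xX: "x \<in> orbit_closure (etaB B)" unfolding X_char x_def by (auto intro: exI[of _ 0])
  have yX: "y \<in> orbit_closure (etaB B)" unfolding X_char y_def shift_def by auto
  define d where "d = Min ((\<lambda>r. (1/2::real)^(to_nat r)) ` R)"
  have dpos: "d > 0" unfolding d_def using R(1,2) by (subst Min_gr_iff) auto
  have bound: "d \<le> dist (\<lambda>z. real_of_int (shift s x z)) (\<lambda>z. real_of_int (shift s y z))" for s
  proof -
    obtain r where r: "r \<in> R" "(0 - s) - r \<in> K" using R(3) by blast
    have "0 - ((0 - s) - r) \<in> K" using lat_diff[OF K lat_zero[OF K] r(2)] .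
    then have rs: "r + s \<in> K" by (simp add: algebra_simps)
    have "shift s x r = 0" unfolding shift_def x_def using rs Lam K_def etaB_0 by blast
    moreover have "r + s + n \<in> (\<lambda>x. n + x) ` L" using rs unfolding K_def by (auto simp: add.commute)
    then have "shift s y r = 1" unfolding shift_def y_def using sub unfolding etaB_def by auto
    ultimately have "shift s x r \<noteq> shift s y r" by simp
    from dist_lower[of "shift s x" r "shift s y", OF this] have "(1/2)^(to_nat r) \<le> dist (\<lambda>z. real_of_int (shift s x z)) (\<lambda>z. real_of_int (shift s y z))" .
    moreover have "d \<le> (1/2)^(to_nat r)" unfolding d_def using R(1) r(1) by auto
    ultimately show ?thesis by linarith
  qed
  have "ereal d \<le> Liminf cofinite (\<lambda>s. ereal (dist (\<lambda>z. real_of_int (shift s x z)) (\<lambda>z. real_of_int (shift s y z))))"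
    by (rule Liminf_bounded) (use bound in auto)
  moreover have "Liminf cofinite (\<lambda>s. ereal (dist (\<lambda>z. real_of_int (shift s x z)) (\<lambda>z. real_of_int (shift s y z)))) = 0"
    using a xX yX unfolding proximal_def by blast
  ultimately show False using dpos by simp
qed

lemma e_imp_a:
  assumes latB: "\<forall>L\<in>B. is_lattice L" and E: "propE B"
  shows "proximal (orbit_closure (etaB B))"
  unfolding proximal_def
proof (intro ballI)
  fix x y assume x: "x \<in> orbit_closure (etaB B)" and y: "y \<in> orbit_closure (etaB B)"
  define D where "D = (\<lambda>s. dist (\<lambda>z. real_of_int (shift s x z)) (\<lambda>z. real_of_int (shift s y z)))"
  have inf: "infinite {s. D s \<le> (1/2)^N}" for N
  proof -
    define V where "V = (from_nat ` {..N} :: (int^'a) set)"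
    have V: "finite V" unfolding V_def by auto
    obtain c1 L1 where c1: "is_lattice L1" "\<forall>l\<in>L1. \<forall>v\<in>V. x (v + (c1 + l)) = 0"
      using main_zero[OF latB E x V lat_UNIV, of 0] by blast
    obtain c2 L2 where c2: "is_lattice L2" "L2 \<subseteq> L1" "c2 - c1 \<in> L1" "\<forall>l\<in>L2. \<forall>v\<in>V. y (v + (c2 + l)) = 0"
      using main_zero[OF latB E y V c1(1), of c1] by blast
    have "(\<lambda>l. c2 + l) ` L2 \<subseteq> {s. D s \<le> (1/2)^N}"
    proof
      fix s assume "s \<in> (\<lambda>l. c2 + l) ` L2"
      then obtain l where l: "l \<in> L2" "s = c2 + l" by blast
      have l1: "(c2 - c1) + l \<in> L1" using lat_add[OF c1(1) c2(3)] l(1) c2(2) by auto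
      have "\<forall>n\<le>N. shift s x (from_nat n) = shift s y (from_nat n)"
      proof (intro allI impI)
        fix n assume "n \<le> N"
        then have v: "from_nat n \<in> V" unfolding V_def by auto
        have "shift s x (from_nat n) = x (from_nat n + (c1 + ((c2 - c1) + l)))"
          unfolding shift_def l(2) by (simp add: algebra_simps)
        also have "\<dots> = 0" using c1(2) l1 v by blast
        also have "\<dots> = y (from_nat n + (c2 + l))" using c2(4) l(1) v by metis
        also have "\<dots> = shift s y (from_nat n)" unfolding shift_def l(2) by simp
        finally show "shift s x (from_nat n) = shift s y (from_nat n)" .
      qed
      then show "s \<in> {s. D s \<le> (1/2)^N}" unfolding D_def using dist_upper by blast
    qed
    moreover have "infinite ((\<lambda>l. c2 + l) ` L2)"
      using lat_infinite[OF c2(1)] by (simp add: finite_image_iff)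
    ultimately show ?thesis using finite_subset by blast
  qed
  have ge: "0 \<le> Liminf cofinite (\<lambda>s. ereal (D s))"
    by (rule Liminf_bounded) (auto simp: D_def)
  have le: "Liminf cofinite (\<lambda>s. ereal (D s)) \<le> 0"
  proof (rule ccontr)
    assume "\<not> ?thesis"
    then have pos: "0 < Liminf cofinite (\<lambda>s. ereal (D s))" by simp
    then obtain z where z: "0 < z" "z < Liminf cofinite (\<lambda>s. ereal (D s))" using dense by blast
    then obtain r where r: "z = ereal r" "r > 0" by (cases z) auto
    obtain N where N: "(1/2::real)^N < r" using real_arch_pow_inv[OF r(2), of "1/2"] by auto
    have "eventually (\<lambda>s. ereal r < ereal (D s)) cofinite"
      using z r le_Liminf_iff[of "Liminf cofinite (\<lambda>s. ereal (D s))" cofinite "\<lambda>s. ereal (D s)"] by auto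
    then have "finite {s. \<not> r < D s}" unfolding eventually_cofinite by simp
    moreover have "{s. D s \<le> (1/2)^N} \<subseteq> {s. \<not> r < D s}" using N by auto
    ultimately show False using inf finite_subset by blast
  qed
  show "Liminf cofinite (\<lambda>s. ereal (dist (\<lambda>z. real_of_int (shift s x z)) (\<lambda>z. real_of_int (shift s y z)))) = 0"
    using ge le unfolding D_def by simp
qed




definition subgrp :: "(int^'m::finite) set \<Rightarrow> bool" where
  "subgrp K \<longleftrightarrow> 0 \<in> K \<and> (\<forall>x\<in>K. \<forall>y\<in>K. x - y \<in> K)"

lemma subgrp_union_cosets:
  assumes L: "is_lattice L" and K: "subgrp K" "L \<subseteq> K"
  shows "K = \<Union>((\<lambda>b. (\<lambda>y. b + y) ` L) ` K)"
proof
  show "K \<subseteq> \<Union>((\<lambda>b. (\<lambda>y. b + y) ` L) ` K)"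
    using lat_zero[OF L] by force
  show "\<Union>((\<lambda>b. (\<lambda>y. b + y) ` L) ` K) \<subseteq> K"
  proof
    fix z assume "z \<in> \<Union>((\<lambda>b. (\<lambda>y. b + y) ` L) ` K)"
    then obtain b l where bl: "b \<in> K" "l \<in> L" "z = b + l" by blast
    have "0 - l \<in> K" using K bl(2) unfolding subgrp_def by blast
    then have "b - (0 - l) \<in> K" using K bl(1) unfolding subgrp_def by blast
    then show "z \<in> K" using bl(3) by simp
  qed
qed

lemma finite_supers:
  assumes L: "is_lattice L"
  shows "finite {K. subgrp K \<and> L \<subseteq> K}"
proof -
  have "{K. subgrp K \<and> L \<subseteq> K} \<subseteq> Union ` Pow (range (\<lambda>a. (\<lambda>y. a + y) ` L))"
  proof
    fix K assume "K \<in> {K. subgrp K \<and> L \<subseteq> K}"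
    then have "K = \<Union>((\<lambda>b. (\<lambda>y. b + y) ` L) ` K)" using subgrp_union_cosets[OF L] by blast
    then show "K \<in> Union ` Pow (range (\<lambda>a. (\<lambda>y. a + y) ` L))" by blast
  qed
  moreover have "finite (Union ` Pow (range (\<lambda>a. (\<lambda>y. a + y) ` L)))"
    using L unfolding is_lattice_def by auto
  ultimately show ?thesis by (rule finite_subset)
qed

lemma subgrp_lattice:
  assumes L: "is_lattice L" and K: "subgrp K" "L \<subseteq> K"
  shows "is_lattice K"
proof -
  have "range (\<lambda>a. (\<lambda>y. a + y) ` K) \<subseteq> Union ` Pow (range (\<lambda>a. (\<lambda>y. a + y) ` L))"
  proof
    fix C assume "C \<in> range (\<lambda>a. (\<lambda>y. a + y) ` K)"
    then obtain a where a: "C = (\<lambda>y. a + y) ` K" by blast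
    have "C = \<Union>((\<lambda>b. (\<lambda>y. b + y) ` L) ` C)"
    proof
      show "C \<subseteq> \<Union>((\<lambda>b. (\<lambda>y. b + y) ` L) ` C)" using lat_zero[OF L] by force
      show "\<Union>((\<lambda>b. (\<lambda>y. b + y) ` L) ` C) \<subseteq> C"
      proof
        fix z assume "z \<in> \<Union>((\<lambda>b. (\<lambda>y. b + y) ` L) ` C)"
        then obtain k l where kl: "k \<in> K" "l \<in> L" "z = (a + k) + l" using a by blast
        have "k + l \<in> K" using subgrp_union_cosets[OF L K] kl by blast
        then show "z \<in> C" using a kl(3) by (auto simp: add.assoc)
      qed
    qed
    then show "C \<in> Union ` Pow (range (\<lambda>a. (\<lambda>y. a + y) ` L))" by blast
  qed
  moreover have "finite (Union ` Pow (range (\<lambda>a. (\<lambda>y. a + y) ` L)))"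
    using L unfolding is_lattice_def by auto
  ultimately have "finite (range (\<lambda>a. (\<lambda>y. a + y) ` K))" by (rule finite_subset)
  then show ?thesis using K unfolding is_lattice_def subgrp_def by blast
qed

definition sumset :: "(int^'m::finite) set \<Rightarrow> (int^'m) set \<Rightarrow> (int^'m) set" where
  "sumset L K = {x + y |x y. x \<in> L \<and> y \<in> K}"

lemma sumset_subgrp:
  assumes L: "is_lattice L" and K: "is_lattice K"
  shows "subgrp (sumset L K)" "L \<subseteq> sumset L K" "K \<subseteq> sumset L K"
proof -
  show "subgrp (sumset L K)" unfolding subgrp_def sumset_def
  proof (intro conjI ballI)
    show "0 \<in> {x + y |x y. x \<in> L \<and> y \<in> K}" using lat_zero[OF L] lat_zero[OF K] by force
    fix u v assume "u \<in> {x + y |x y. x \<in> L \<and> y \<in> K}" "v \<in> {x + y |x y. x \<in> L \<and> y \<in> K}"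
    then obtain a b c d where "a \<in> L" "b \<in> K" "c \<in> L" "d \<in> K" "u = a + b" "v = c + d" by blast
    moreover have "u - v = (a - c) + (b - d)" using calculation by simp
    ultimately show "u - v \<in> {x + y |x y. x \<in> L \<and> y \<in> K}"
      using lat_diff[OF L] lat_diff[OF K] by blast
  qed
  show "L \<subseteq> sumset L K" unfolding sumset_def using lat_zero[OF K] by force
  show "K \<subseteq> sumset L K" unfolding sumset_def using lat_zero[OF L] by force
qed

lemma lat_INTER:
  assumes "finite I" "I \<noteq> {}" "\<forall>j\<in>I. is_lattice (Ls j)"
  shows "is_lattice (\<Inter>j\<in>I. Ls j)"
  using assms
proof (induction I rule: finite_ne_induct)
  case (singleton x) then show ?case by simp
next
  case (insert x F)
  then show ?case using lat_Int[of "Ls x" "\<Inter>j\<in>F. Ls j"] by simp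
qed

lemma e_imp_c:
  fixes k :: nat
  assumes E: "propE B" and k: "k \<ge> 1" and Ls: "\<forall>j\<in>{1..k}. is_lattice (Ls j)"
    and ne: "(\<Union>j\<in>{1..k}. Ls j) \<noteq> UNIV"
  shows "\<not> \<Union>B \<subseteq> (\<Union>j\<in>{1..k}. Ls j)"
proof
  assume sub: "\<Union>B \<subseteq> (\<Union>j\<in>{1..k}. Ls j)"
  define K where "K = (\<Inter>j\<in>{1..(k::nat)}. Ls j)"
  have K: "is_lattice K" unfolding K_def using lat_INTER[of "{1..k}" Ls] Ls k by auto
  obtain n where n: "n \<notin> (\<Union>j\<in>{1..k}. Ls j)" using ne by blast
  have "(\<lambda>x. n + x) ` K \<subseteq> UNIV - \<Union>B"
  proof
    fix z assume "z \<in> (\<lambda>x. n + x) ` K"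
    then obtain l where l: "l \<in> K" "z = n + l" by blast
    have "z \<notin> Ls j" if j: "j \<in> {1..k}" for j
    proof
      assume "z \<in> Ls j"
      moreover have "l \<in> Ls j" using l(1) j unfolding K_def by blast
      ultimately have "z - l \<in> Ls j" using lat_diff Ls j by blast
      then show False using n j l(2) by auto
    qed
    then show "z \<in> UNIV - \<Union>B" using sub by blast
  qed
  then show False using E K unfolding propE_def by blast
qed

lemma c_imp_e:
  assumes latB: "\<forall>L\<in>B. is_lattice L" and Bne: "B \<noteq> {}"
    and c: "\<forall>k\<ge>1. \<forall>Ls :: nat \<Rightarrow> (int ^ 'm::finite) set.
               (\<forall>j\<in>{1..k}. is_lattice (Ls j)) \<and> (\<Union>j\<in>{1..k}. Ls j) \<noteq> UNIV
               \<longrightarrow> \<not> \<Union>B \<subseteq> (\<Union>j\<in>{1..k}. Ls j)"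
  shows "propE B"
  unfolding propE_def
proof (intro allI impI notI)
  fix n and L :: "(int^'m) set" assume L: "is_lattice L" and sub: "(\<lambda>x. n + x) ` L \<subseteq> UNIV - \<Union>B"
  define S where "S = (\<lambda>Lam. sumset L Lam) ` B"
  have Ssub: "S \<subseteq> {K. subgrp K \<and> L \<subseteq> K}" unfolding S_def using sumset_subgrp[OF L] latB by blast
  then have "finite S" using finite_supers[OF L] finite_subset by blast
  then obtain xs where xs: "set xs = S" using finite_list by blast
  define k where "k = length xs"
  define Ls where "Ls = (\<lambda>j. xs ! (j - 1))"
  have U: "(\<Union>j\<in>{1..k}. Ls j) = \<Union>S"
  proof -
    have "Ls ` {1..k} = set xs"
    proof
      show "Ls ` {1..k} \<subseteq> set xs" unfolding Ls_def k_def
      proof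
        fix K assume "K \<in> (\<lambda>j. xs ! (j - 1)) ` {1..length xs}"
        then obtain j where "j \<in> {1..length xs}" "K = xs ! (j - 1)" by blast
        then show "K \<in> set xs" using nth_mem[of "j - 1" xs] by auto
      qed
      show "set xs \<subseteq> Ls ` {1..k}"
      proof
        fix K assume "K \<in> set xs"
        then obtain i where i: "i < length xs" "K = xs ! i" by (auto simp: set_conv_nth)
        then show "K \<in> Ls ` {1..k}" unfolding Ls_def k_def by (intro image_eqI[of _ _ "Suc i"]) auto
      qed
    qed
    then show ?thesis using xs by auto
  qed
  have "S \<noteq> {}" using Bne unfolding S_def by auto
  then have k1: "k \<ge> 1" unfolding k_def using xs by (cases xs) auto
  have latLs: "\<forall>j\<in>{1..k}. is_lattice (Ls j)"
  proof
    fix j assume "j \<in> {1..k}"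
    then have "Ls j \<in> S" using xs nth_mem[of "j - 1" xs] unfolding Ls_def k_def by auto
    then show "is_lattice (Ls j)" using Ssub subgrp_lattice[OF L] by blast
  qed
  have nS: "n \<notin> \<Union>S"
  proof
    assume "n \<in> \<Union>S"
    then obtain Lam a b where ab: "Lam \<in> B" "a \<in> L" "b \<in> Lam" "n = a + b"
      unfolding S_def sumset_def by blast
    have "0 - a \<in> L" using lat_diff[OF L lat_zero[OF L] ab(2)] .
    moreover have "n + (0 - a) = b" using ab(4) by simp
    ultimately have "b \<in> UNIV - \<Union>B" using sub by blast
    then show False using ab by blast
  qed
  have MS: "\<Union>B \<subseteq> \<Union>S" unfolding S_def using sumset_subgrp(3)[OF L] latB by blast
  have "(\<Union>j\<in>{1..k}. Ls j) \<noteq> UNIV" using U nS by auto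
  then have "\<not> \<Union>B \<subseteq> (\<Union>j\<in>{1..k}. Ls j)" using c[rule_format, OF k1, of Ls] latLs by blast
  then show False using U MS by simp
qed

lemma d_imp_e:
  assumes latB: "\<forall>L\<in>B. is_lattice L"
    and d: "\<exists>C\<subseteq>B. infinite C \<and> (\<forall>L\<in>C. \<forall>L'\<in>C. L \<noteq> L' \<longrightarrow> coprime_subgroups L L')"
  shows "propE B"
  unfolding propE_def
proof (intro allI impI notI)
  fix n and L :: "(int^'a) set" assume L: "is_lattice L" and sub: "(\<lambda>x. n + x) ` L \<subseteq> UNIV - \<Union>B"
  obtain C where C: "C \<subseteq> B" "infinite C" "\<forall>L\<in>C. \<forall>L'\<in>C. L \<noteq> L' \<longrightarrow> coprime_subgroups L L'"
    using d by blast
  have "(\<lambda>Lam. sumset L Lam) ` C \<subseteq> {K. subgrp K \<and> L \<subseteq> K}"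
    using sumset_subgrp[OF L] latB C(1) by blast
  then have "finite ((\<lambda>Lam. sumset L Lam) ` C)" using finite_supers[OF L] finite_subset by blast
  then have "\<not> inj_on (\<lambda>Lam. sumset L Lam) C" using C(2) finite_imageD by blast
  then obtain A A' where AA: "A \<in> C" "A' \<in> C" "A \<noteq> A'" "sumset L A = sumset L A'"
    unfolding inj_on_def by blast
  have latA: "is_lattice A" "is_lattice A'" using AA C(1) latB by auto
  have "n \<in> {x + y |x y. x \<in> A \<and> y \<in> A'}" using C(3) AA unfolding coprime_subgroups_def by blast
  then obtain a b where ab: "a \<in> A" "b \<in> A'" "n = a + b" by blast
  have "b \<in> sumset L A" using AA(4) sumset_subgrp(3)[OF L latA(2)] ab(2) by blast
  then obtain l a' where la: "l \<in> L" "a' \<in> A" "b = l + a'" unfolding sumset_def by blast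
  have "0 - l \<in> L" using lat_diff[OF L lat_zero[OF L] la(1)] .
  moreover have "n + (0 - l) = a + a'" using ab(3) la(3) by simp
  ultimately have "a + a' \<in> UNIV - \<Union>B" using sub by (metis image_eqI subsetD)
  moreover have "a + a' \<in> A" using lat_add[OF latA(1) ab(1) la(2)] .
  ultimately show False using AA(1) C(1) by blast
qed




lemma density_le1: "upper_banach_density (A :: (int^'m::finite) set) \<le> 1"
  unfolding upper_banach_density_def
proof (rule SUP_least)
  fix G :: "nat \<Rightarrow> (int^'m) set" assume G: "G \<in> {F. folner F}"
  have "ereal (real (card (A \<inter> G n)) / real (card (G n))) \<le> 1" for n
  proof -
    have "card (A \<inter> G n) \<le> card (G n)" using G unfolding folner_def by (auto intro: card_mono)
    then have "real (card (A \<inter> G n)) / real (card (G n)) \<le> 1"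
      by (cases "card (G n) = 0") (auto simp: divide_le_eq)
    then show ?thesis by simp
  qed
  then show "limsup (\<lambda>n. ereal (real (card (A \<inter> G n)) / real (card (G n)))) \<le> 1"
    by (intro Limsup_bounded) auto
qed

lemma f_imp_e:
  assumes f: "upper_banach_density (\<Union>B) = (1 :: ereal)"
  shows "propE (B :: (int^'m::finite) set set)"
  unfolding propE_def
proof (intro allI impI notI)
  fix n and L :: "(int^'m) set" assume L: "is_lattice L" and sub: "(\<lambda>x. n + x) ` L \<subseteq> UNIV - \<Union>B"
  obtain R where R: "finite R" "R \<noteq> {}" "\<forall>g. \<exists>r\<in>R. g - r \<in> L" using lat_reps[OF L] by blast
  define p where "p = card R"
  have p: "p \<ge> 1" unfolding p_def using R by (simp add: Suc_le_eq card_gt_0_iff)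
  define A where "A = \<Union>B"
  define cos where "cos = (\<lambda>r. {g. g - r \<in> L})"
  have cosn: "cos n \<inter> A = {}"
  proof -
    have "cos n \<subseteq> (\<lambda>x. n + x) ` L" unfolding cos_def by (auto intro: image_eqI[of _ _ "_ - n"])
    then show ?thesis using sub unfolding A_def by blast
  qed
  have key: "ereal (real (card (A \<inter> G k)) / real (card (G k))) \<le> ereal (1 - 1 / (2 * p))"
    if fin: "finite (G k)"
      and rho: "\<forall>r\<in>R. real (card ((\<lambda>x. x + (n - r)) ` G k \<inter> G k)) / real (card (G k)) \<ge> 1 - 1 / (2 * p^2)"
    for G :: "nat \<Rightarrow> (int^'m) set" and k
  proof -
    define N where "N = card (G k)"
    obtain r0 where r0: "r0 \<in> R" using R by blast
    have "N > 0"
    proof (rule ccontr)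
      assume "\<not> N > 0"
      then have "N = 0" by simp
      moreover have "1 - 1 / (2 * real p^2) > 0"
      proof -
        have "real p \<ge> 1" using p by simp
        then have "real p^2 \<ge> 1" by (simp add: one_le_power)
        then show ?thesis by (simp add: divide_less_eq)
      qed
      ultimately show False using rho r0 unfolding N_def by fastforce
    qed
    define c where "c = card (G k \<inter> cos n)"
    have cov: "G k \<subseteq> (\<Union>r\<in>R. G k \<inter> cos r)" using R(3) unfolding cos_def by blast
    have "N \<le> (\<Sum>r\<in>R. card (G k \<inter> cos r))"
      unfolding N_def using card_mono[OF _ cov] card_UN_le[OF R(1), of "\<lambda>r. G k \<inter> cos r"] fin R(1)
      by (meson le_trans finite_UN_I finite_Int)
    moreover have "card (G k \<inter> cos r) \<le> c + (N - card ((\<lambda>x. x + (n - r)) ` G k \<inter> G k))" if r: "r \<in> R" for r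
    proof -
      define t where "t = n - r"
      define T where "T = (\<lambda>x. x + t) ` G k"
      have injT: "inj (\<lambda>x::int^'m. x + t)" by (auto intro: injI)
      have cT: "card T = N" unfolding T_def N_def by (rule card_image) (use injT in \<open>auto intro: inj_on_subset\<close>)
      have finT: "finite T" unfolding T_def using fin by auto
      have "card (G k \<inter> cos r) = card ((\<lambda>x. x + t) ` (G k \<inter> cos r))"
        by (rule card_image[symmetric]) (use injT in \<open>auto intro: inj_on_subset\<close>)
      also have "(\<lambda>x. x + t) ` (G k \<inter> cos r) \<subseteq> (G k \<inter> cos n) \<union> (T - G k)"
        unfolding T_def cos_def t_def by (auto simp: algebra_simps)
      then have "card ((\<lambda>x. x + t) ` (G k \<inter> cos r)) \<le> card ((G k \<inter> cos n) \<union> (T - G k))"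
        by (rule card_mono[rotated]) (use fin finT in auto)
      also have "\<dots> \<le> c + card (T - G k)" unfolding c_def by (rule card_Un_le)
      also have "card (T - G k) = N - card (T \<inter> G k)"
        using card_Diff_subset_Int[of T "G k"] finT cT fin
        by (metis Diff_Diff_Int Int_lower1 card_Diff_subset finite_Int inf_commute)
      finally show ?thesis unfolding T_def t_def .
    qed
    then have "(\<Sum>r\<in>R. card (G k \<inter> cos r)) \<le> (\<Sum>r\<in>R. c + (N - card ((\<lambda>x. x + (n - r)) ` G k \<inter> G k)))"
      by (rule sum_mono)
    ultimately have ineq: "real N \<le> (\<Sum>r\<in>R. real c + (real N - real (card ((\<lambda>x. x + (n - r)) ` G k \<inter> G k))))"
    proof -
      assume a1: "N \<le> (\<Sum>r\<in>R. card (G k \<inter> cos r))"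
        and a2: "(\<Sum>r\<in>R. card (G k \<inter> cos r)) \<le> (\<Sum>r\<in>R. c + (N - card ((\<lambda>x. x + (n - r)) ` G k \<inter> G k)))"
      have le: "card ((\<lambda>x. x + (n - r)) ` G k \<inter> G k) \<le> N" for r
        unfolding N_def using fin by (intro card_mono) auto
      have "real N \<le> real (\<Sum>r\<in>R. c + (N - card ((\<lambda>x. x + (n - r)) ` G k \<inter> G k)))"
        using a1 a2 by linarith
      also have "\<dots> = (\<Sum>r\<in>R. real c + (real N - real (card ((\<lambda>x. x + (n - r)) ` G k \<inter> G k))))"
        unfolding of_nat_sum by (rule sum.cong[OF refl]) (use le in \<open>simp only: of_nat_add of_nat_diff\<close>)
      finally show ?thesis .
    qed
    have each: "real N - real (card ((\<lambda>x. x + (n - r)) ` G k \<inter> G k)) \<le> real N / (2 * p^2)" if "r \<in> R" for r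
    proof -
      have "real (card ((\<lambda>x. x + (n - r)) ` G k \<inter> G k)) / real N \<ge> 1 - 1 / (2 * p^2)"
        using rho that unfolding N_def by blast
      then show ?thesis using \<open>N > 0\<close> by (simp add: field_simps)
    qed
    have "real N \<le> (\<Sum>r\<in>R. real c + real N / (2 * p^2))"
      using ineq sum_mono[of R "\<lambda>r. real c + (real N - real (card ((\<lambda>x. x + (n - r)) ` G k \<inter> G k)))"
          "\<lambda>r. real c + real N / (2 * p^2)"] each by fastforce
    also have "\<dots> = p * real c + real N / (2 * p)" unfolding p_def
      using p unfolding p_def by (simp add: field_simps power2_eq_square)
    finally have cbound: "real N \<le> p * real c + real N / (2 * p)" .
    have AG: "card (A \<inter> G k) + c \<le> N"
    proof -
      have "card (A \<inter> G k) + c = card ((A \<inter> G k) \<union> (G k \<inter> cos n))"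
        unfolding c_def using fin cosn by (subst card_Un_disjoint) auto
      also have "\<dots> \<le> N" unfolding N_def using fin by (intro card_mono) auto
      finally show ?thesis .
    qed
    have "real (card (A \<inter> G k)) / real N \<le> 1 - 1 / (2 * p)"
    proof -
      have "real N * (1 - 1/(2*p)) \<le> p * real c" using cbound by (simp add: algebra_simps)
      moreover have q: "real p \<ge> 1" using p by simp
      ultimately have h1: "real N * (1 - 1/(2*p)) / p \<le> real c"
        by (simp add: pos_divide_le_eq mult.commute)
      have "1 / (2 * real p) \<le> (1 - 1/(2*p)) / p" using q by (simp add: field_simps)
      then have "real N * (1 / (2 * real p)) \<le> real N * ((1 - 1/(2*p)) / p)"
        by (rule mult_left_mono) simp
      then have "real N / (2 * p) \<le> real c" using h1 by simp
      moreover have a: "real (card (A \<inter> G k)) \<le> real N - real c" using AG by simp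
      ultimately have "real (card (A \<inter> G k)) \<le> real N - real N / (2 * p)" by linarith
      also have "\<dots> = (1 - 1 / (2 * p)) * real N" by (simp add: algebra_simps)
      finally show ?thesis using \<open>N > 0\<close> by (simp add: pos_divide_le_eq)
    qed
    then show ?thesis unfolding N_def by simp
  qed
  have "upper_banach_density A \<le> ereal (1 - 1 / (2 * p))"
    unfolding upper_banach_density_def
  proof (rule SUP_least)
    fix G :: "nat \<Rightarrow> (int^'m) set" assume G: "G \<in> {F. folner F}"
    have ev: "eventually (\<lambda>k. \<forall>r\<in>R. real (card ((\<lambda>x. x + (n - r)) ` G k \<inter> G k)) / real (card (G k)) > 1 - 1 / (2 * p^2)) sequentially"
    proof (rule eventually_ball_finite[OF R(1)], intro ballI)
      fix r
      have "(\<lambda>k. real (card ((\<lambda>x. x + (n - r)) ` G k \<inter> G k)) / real (card (G k))) \<longlonglongrightarrow> 1"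
        using G unfolding folner_def by blast
      moreover have "1 - 1 / real (2 * p^2) < 1" using p by simp
      ultimately show "eventually (\<lambda>k. real (card ((\<lambda>x. x + (n - r)) ` G k \<inter> G k)) / real (card (G k)) > 1 - 1 / (2 * p^2)) sequentially"
        by (rule order_tendstoD(1))
    qed
    have "eventually (\<lambda>k. ereal (real (card (A \<inter> G k)) / real (card (G k))) \<le> ereal (1 - 1 / (2 * p))) sequentially"
      using ev
    proof eventually_elim
      case (elim k)
      have "finite (G k)" using G unfolding folner_def by blast
      moreover have "\<forall>r\<in>R. real (card ((\<lambda>x. x + (n - r)) ` G k \<inter> G k)) / real (card (G k)) \<ge> 1 - 1 / (2 * p^2)"
        using elim by (auto intro: less_imp_le)
      ultimately show ?case by (rule key)
    qed
    then show "limsup (\<lambda>k. ereal (real (card (A \<inter> G k)) / real (card (G k)))) \<le> ereal (1 - 1 / (2 * p))"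
      by (rule Limsup_bounded)
  qed
  moreover have "1 - 1 / (2 * real p) < 1" using p by simp
  ultimately show False using f unfolding A_def by auto
qed




lemma vecset_eq:
  "{x::'a^'m::finite. \<forall>i. x$i \<in> S i} = vec_lambda ` (Pi\<^sub>E UNIV S)"
proof
  show "{x::'a^'m. \<forall>i. x$i \<in> S i} \<subseteq> vec_lambda ` (Pi\<^sub>E UNIV S)"
  proof
    fix x :: "'a^'m" assume "x \<in> {x. \<forall>i. x$i \<in> S i}"
    then have "vec_nth x \<in> Pi\<^sub>E UNIV S" by auto
    moreover have "x = vec_lambda (vec_nth x)" by simp
    ultimately show "x \<in> vec_lambda ` (Pi\<^sub>E UNIV S)" by blast
  qed
  show "vec_lambda ` (Pi\<^sub>E UNIV S) \<subseteq> {x::'a^'m. \<forall>i. x$i \<in> S i}" by auto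
qed

lemma card_vecset:
  assumes "\<And>i. finite (S i)"
  shows "card {x::'a^'m::finite. \<forall>i. x$i \<in> S i} = (\<Prod>i\<in>UNIV. card (S i))"
proof -
  have "inj_on (vec_lambda :: ('m \<Rightarrow> 'a) \<Rightarrow> 'a^'m) (Pi\<^sub>E UNIV S)"
    by (auto intro!: inj_onI)
  then show ?thesis unfolding vecset_eq by (simp add: card_image card_PiE)
qed

lemma finite_vecset:
  assumes "\<And>i. finite (S i)"
  shows "finite {x::'a^'m::finite. \<forall>i. x$i \<in> S i}"
  unfolding vecset_eq using assms by (intro finite_imageI finite_PiE) auto

definition box :: "nat \<Rightarrow> (int^'m::finite) set" where
  "box k = {x. \<forall>i. x$i \<in> {- int k..int k}}"

lemma finite_box: "finite (box k)" unfolding box_def by (rule finite_vecset) simp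

lemma zero_box: "0 \<in> box k" unfolding box_def by simp

lemma card_box: "card (box k :: (int^'m::finite) set) = (\<Prod>i\<in>(UNIV::'m set). 2 * k + 1)"
proof -
  have c: "card {- int k..int k} = 2*k+1" by simp
  show ?thesis unfolding box_def
    using card_vecset[of "\<lambda>i::'m. {- int k..int k}"] unfolding c by simp
qed

lemma box_shift: "(\<lambda>x. x + g) ` box k \<inter> box k =
   {x::int^'m::finite. \<forall>i. x$i \<in> {- int k..int k} \<inter> {g$i - int k..g$i + int k}}"
proof -
  have 1: "x \<in> (\<lambda>x. x + g) ` box k \<longleftrightarrow> x - g \<in> box k" for x
    by (auto intro: image_eqI[of _ _ "x - g"])
  have 2: "(x$i - g$i \<in> {- int k..int k} \<and> x$i \<in> {- int k..int k}) \<longleftrightarrow>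
      x$i \<in> {- int k..int k} \<inter> {g$i - int k..g$i + int k}" for x :: "int^'m" and i
    by auto
  show ?thesis
  proof (rule set_eqI)
    fix x :: "int^'m"
    have "x \<in> (\<lambda>x. x + g) ` box k \<inter> box k \<longleftrightarrow> (\<forall>i. x$i - g$i \<in> {- int k..int k} \<and> x$i \<in> {- int k..int k})"
      unfolding Int_iff 1 by (simp add: box_def all_conj_distrib del: atLeastAtMost_iff)
    also have "\<dots> \<longleftrightarrow> (\<forall>i. x$i \<in> {- int k..int k} \<inter> {g$i - int k..g$i + int k})"
      using 2 by presburger
    finally show "x \<in> (\<lambda>x. x + g) ` box k \<inter> box k \<longleftrightarrow> x \<in> {x. \<forall>i. x$i \<in> {- int k..int k} \<inter> {g$i - int k..g$i + int k}}"
      by simp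
  qed
qed

lemma card_int_inter: "card ({- int k..int k} \<inter> {a - int k..a + int k}) = nat (2 * int k + 1 - \<bar>a\<bar>)"
proof (cases "a \<ge> 0")
  case True
  then have "{- int k..int k} \<inter> {a - int k..a + int k} = {a - int k..int k}" by auto
  then show ?thesis using True by simp
next
  case False
  then have "{- int k..int k} \<inter> {a - int k..a + int k} = {- int k..a + int k}" by auto
  then show ?thesis using False by simp
qed

lemma factor_tendsto: "(\<lambda>k. real (nat (2 * int k + 1 - \<bar>a\<bar>)) / real (2 * k + 1)) \<longlonglongrightarrow> 1"
proof -
  have ev: "eventually (\<lambda>k. 1 - real_of_int \<bar>a\<bar> / (2 * real k + 1) = real (nat (2 * int k + 1 - \<bar>a\<bar>)) / real (2 * k + 1)) sequentially"
    using eventually_ge_at_top[of "nat \<bar>a\<bar>"]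
  proof eventually_elim
    case (elim k)
    then have "2 * int k + 1 - \<bar>a\<bar> \<ge> 0" by linarith
    then have "real (nat (2 * int k + 1 - \<bar>a\<bar>)) = 2 * real k + 1 - real_of_int \<bar>a\<bar>" by simp
    then show ?case by (simp add: field_simps)
  qed
  have z: "(\<lambda>k. real_of_int \<bar>a\<bar> / (2 * real k + 1)) \<longlonglongrightarrow> 0"
  proof (rule Lim_null_comparison)
    show "\<forall>\<^sub>F k in sequentially. norm (real_of_int \<bar>a\<bar> / (2 * real k + 1)) \<le> real_of_int \<bar>a\<bar> * inverse (real (Suc k))"
      by (intro always_eventually allI) (simp add: divide_simps mult_left_mono)
    show "(\<lambda>k. real_of_int \<bar>a\<bar> * inverse (real (Suc k))) \<longlonglongrightarrow> 0"
      by (rule tendsto_mult_right_zero) (rule LIMSEQ_inverse_real_of_nat)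
  qed
  have "(\<lambda>k. 1 - real_of_int \<bar>a\<bar> / (2 * real k + 1)) \<longlonglongrightarrow> 1 - 0"
    by (intro tendsto_diff tendsto_const z)
  then have "(\<lambda>k. 1 - real_of_int \<bar>a\<bar> / (2 * real k + 1)) \<longlonglongrightarrow> 1" by simp
  then show ?thesis using ev by (rule Lim_transform_eventually)
qed

lemma box_ratio_tendsto:
  fixes g :: "int^'m::finite"
  shows "(\<lambda>k. real (card ((\<lambda>x. x + g) ` box k \<inter> box k)) / real (card (box k :: (int^'m) set))) \<longlonglongrightarrow> 1"
proof -
  have eq: "real (card ((\<lambda>x. x + g) ` box k \<inter> box k)) / real (card (box k :: (int^'m) set))
      = (\<Prod>i\<in>UNIV. real (nat (2 * int k + 1 - \<bar>g$i\<bar>)) / real (2 * k + 1))" for k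
  proof -
    have c1: "card ((\<lambda>x. x + g) ` box k \<inter> box k) = (\<Prod>i\<in>UNIV. nat (2 * int k + 1 - \<bar>g$i\<bar>))"
      unfolding box_shift
      using card_vecset[of "\<lambda>i. {- int k..int k} \<inter> {g$i - int k..g$i + int k}"]
      unfolding card_int_inter by simp
    show ?thesis unfolding c1 card_box prod_dividef of_nat_prod by simp
  qed
  have "(\<lambda>k. \<Prod>i\<in>(UNIV::'m set). real (nat (2 * int k + 1 - \<bar>g$i\<bar>)) / real (2 * k + 1)) \<longlonglongrightarrow> (\<Prod>i\<in>(UNIV::'m set). 1)"
    by (rule tendsto_prod) (rule factor_tendsto)
  then show ?thesis unfolding eq by simp
qed

lemma b_imp_f:
  assumes b: "(\<lambda>_. 0) \<in> orbit_closure (etaB B)"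
  shows "upper_banach_density (\<Union>B :: (int^'m::finite) set) = 1"
proof -
  have "\<exists>s. \<forall>g\<in>box k. g + s \<in> \<Union>B" for k :: nat
  proof -
    obtain n where n: "\<forall>g\<in>box k. 0 = etaB B (g + n)" using b finite_box unfolding X_char by blast
    then show ?thesis unfolding etaB_def by (intro exI[of _ n]) (auto split: if_splits)
  qed
  then obtain s where s: "\<And>k. \<forall>g\<in>box k. g + s k \<in> \<Union>B" by metis
  define G where "G = (\<lambda>k. (\<lambda>x. x + s k) ` (box k :: (int^'m) set))"
  have injs: "inj (\<lambda>x::int^'m. x + c)" for c by (auto intro: injI)
  have cardG: "card (G k) = card (box k :: (int^'m) set)" for k
    unfolding G_def by (rule card_image) (use injs in \<open>auto intro: inj_on_subset\<close>)
  have folG: "folner G" unfolding folner_def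
  proof (intro conjI allI)
    show "finite (G k)" for k unfolding G_def using finite_box by auto
    fix g :: "int^'m"
    have "(\<lambda>x. x + g) ` G k \<inter> G k = (\<lambda>x. x + s k) ` ((\<lambda>x. x + g) ` box k \<inter> box k)" for k
    proof -
      have "(\<lambda>x. x + g) ` G k = (\<lambda>x. x + s k) ` ((\<lambda>x. x + g) ` box k)"
        unfolding G_def image_image by (simp add: algebra_simps)
      then show ?thesis unfolding G_def by (simp add: image_Int[OF injs])
    qed
    then have "card ((\<lambda>x. x + g) ` G k \<inter> G k) = card ((\<lambda>x. x + g) ` box k \<inter> box k)" for k
      by (simp add: card_image inj_on_subset[OF injs])
    then show "(\<lambda>k. real (card ((\<lambda>x. x + g) ` G k \<inter> G k)) / real (card (G k))) \<longlonglongrightarrow> 1"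
      using box_ratio_tendsto[of g] by (simp add: cardG)
  qed
  have "(\<Union>B) \<inter> G k = G k" for k unfolding G_def using s by auto
  moreover have "card (G k) > 0" for k
    using cardG[of k] finite_box[of k] zero_box[of k] by (auto simp: card_gt_0_iff)
  ultimately have "(\<lambda>k. ereal (real (card (\<Union>B \<inter> G k)) / real (card (G k)))) = (\<lambda>k. 1)" by auto
  then have "limsup (\<lambda>k. ereal (real (card (\<Union>B \<inter> G k)) / real (card (G k)))) = 1"
    by (simp add: Limsup_const)
  moreover have "G \<in> {F. folner F}" using folG by simp
  ultimately have "1 \<le> upper_banach_density (\<Union>B :: (int^'m) set)"
    unfolding upper_banach_density_def
    using SUP_upper[of G "{F. folner F}" "\<lambda>F. limsup (\<lambda>n. ereal (real (card (\<Union>B \<inter> F n)) / real (card (F n))))"]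
    by simp
  then show ?thesis by (rule antisym[OF density_le1])
qed


theorem theorem5p3:
  fixes \<B> :: "(int ^ 'm::finite) set set"
  assumes "infinite \<B>"
    and "\<forall>L\<in>\<B>. proper_lattice L"
  defines "M \<equiv> \<Union>\<B>"
    and "F \<equiv> UNIV - \<Union>\<B>"
    and "\<eta> \<equiv> (\<lambda>g. if g \<in> UNIV - \<Union>\<B> then 1 else 0 :: int)"
  shows
   "let a = proximal (orbit_closure \<eta>);
        b = (\<lambda>_. 0) \<in> orbit_closure \<eta>;
        c = (\<forall>k\<ge>1. \<forall>Ls :: nat \<Rightarrow> (int ^ 'm) set.
               (\<forall>j\<in>{1..k}. is_lattice (Ls j)) \<and> (\<Union>j\<in>{1..k}. Ls j) \<noteq> UNIV
               \<longrightarrow> \<not> M \<subseteq> (\<Union>j\<in>{1..k}. Ls j));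
        d = (\<exists>C\<subseteq>\<B>. infinite C \<and>
               (\<forall>L\<in>C. \<forall>L'\<in>C. L \<noteq> L' \<longrightarrow> coprime_subgroups L L'));
        e = (\<forall>n L. is_lattice L \<longrightarrow> \<not> ((\<lambda>x. n + x) ` L \<subseteq> F));
        f = (upper_banach_density M = 1)
    in (d \<longrightarrow> a) \<and> (a \<longleftrightarrow> b) \<and> (a \<longleftrightarrow> c) \<and> (a \<longleftrightarrow> e) \<and> (a \<longleftrightarrow> f)"
  proof -
  have etaeq: "\<eta> = etaB \<B>" unfolding \<eta>_def etaB_def by simp
  have latB: "\<forall>L\<in>\<B>. is_lattice L" using assms(2) unfolding proper_lattice_def by blast
  have Bne: "\<B> \<noteq> {}" using assms(1) by auto
  have ae: "proximal (orbit_closure \<eta>) \<longleftrightarrow> propE \<B>"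
    unfolding etaeq by (rule iffI[OF a_imp_e[OF latB Bne] e_imp_a[OF latB]])
  have be: "(\<lambda>_. 0) \<in> orbit_closure \<eta> \<longleftrightarrow> propE \<B>"
    unfolding etaeq by (rule iffI[OF b_imp_e e_imp_b[OF latB]])
  have ce: "(\<forall>k\<ge>1. \<forall>Ls :: nat \<Rightarrow> (int ^ 'm) set.
               (\<forall>j\<in>{1..k}. is_lattice (Ls j)) \<and> (\<Union>j\<in>{1..k}. Ls j) \<noteq> UNIV
               \<longrightarrow> \<not> M \<subseteq> (\<Union>j\<in>{1..k}. Ls j)) \<longleftrightarrow> propE \<B>"
    unfolding M_def
  proof (rule iffI)
    assume c: "\<forall>k\<ge>1. \<forall>Ls :: nat \<Rightarrow> (int ^ 'm) set.
               (\<forall>j\<in>{1..k}. is_lattice (Ls j)) \<and> (\<Union>j\<in>{1..k}. Ls j) \<noteq> UNIV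
               \<longrightarrow> \<not> \<Union>\<B> \<subseteq> (\<Union>j\<in>{1..k}. Ls j)"
    show "propE \<B>" by (rule c_imp_e[OF latB Bne c])
  next
    assume E: "propE \<B>"
    show "\<forall>k\<ge>1. \<forall>Ls :: nat \<Rightarrow> (int ^ 'm) set.
               (\<forall>j\<in>{1..k}. is_lattice (Ls j)) \<and> (\<Union>j\<in>{1..k}. Ls j) \<noteq> UNIV
               \<longrightarrow> \<not> \<Union>\<B> \<subseteq> (\<Union>j\<in>{1..k}. Ls j)"
    proof (intro allI impI)
      fix k :: nat and Ls :: "nat \<Rightarrow> (int ^ 'm) set"
      assume "k \<ge> 1" "(\<forall>j\<in>{1..k}. is_lattice (Ls j)) \<and> (\<Union>j\<in>{1..k}. Ls j) \<noteq> UNIV"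
      then show "\<not> \<Union>\<B> \<subseteq> (\<Union>j\<in>{1..k}. Ls j)" using e_imp_c[OF E, of k Ls] by blast
    qed
  qed
  have de: "(\<exists>C\<subseteq>\<B>. infinite C \<and>
               (\<forall>L\<in>C. \<forall>L'\<in>C. L \<noteq> L' \<longrightarrow> coprime_subgroups L L')) \<longrightarrow> propE \<B>"
    using d_imp_e[OF latB] by (rule impI)
  have ee: "(\<forall>n L. is_lattice L \<longrightarrow> \<not> ((\<lambda>x. n + x) ` L \<subseteq> F)) \<longleftrightarrow> propE \<B>"
    unfolding F_def propE_def by (rule refl)
  have fe: "(upper_banach_density M = 1) \<longleftrightarrow> propE \<B>"
    unfolding M_def by (rule iffI[OF f_imp_e b_imp_f[OF e_imp_b[OF latB]]])
  show ?thesis unfolding Let_def ae be ce ee fe using de by simp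
qed

end
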